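(* Let $p$ be a prime and $f(x)=(x-x_1)\cdots(x-x_r)\in\mathbb{F}_p[x_1,\ldots,x_r][x]$. Let $r,e,d$ be integers with $r\ge2$, $\frac{p-1}{2}<e\le p-1$, $1\le d\le p$. Then for all $1\le i\le r$ and $1\le j\le r$, the element $\left\{\left(\frac{\partial}{\partial x}\right)^{p-d}f(x)^e\right\}[x_i^p,x_j]$ is divisible by $\prod_{1\le \ell\le r,\ \ell\ne i}(x_i-x_\ell)^{2e-(p-1)}$ in $\mathbb{F}_p[x_1,\ldots,x_r]$.
   Context: $x_1,\dots,x_r$ are independent indeterminates over $\mathbb{F}_p$. For a field $K$ of characteristic $p$ and $F(x)\in K(x)$, write uniquely $F(x)=\sum_{i=0}^{p-1}F_i(x^p)x^i$ with $F_i(x^p)\in K(x^p)$, and define $F[t,x]=\sum_{i=0}^{p-1}F_i(t)x^i$ for a new variable $t$; $F[x_i^p,x_j]$ denotes the substitution $t=x_i^p$, $x=x_j$. *)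

theory Defs
  imports "HOL-Library.Poly_Mapping" "HOL-Computational_Algebra.Polynomial"
    "Berlekamp_Zassenhaus.Finite_Field"
begin

text \<open>The polynomial ring F_p[x_1, x_2, ...] : polynomials as finitely supported maps
  from monomials (finitely supported exponent vectors) to coefficients in F_p = 'p mod_ring.\<close>
type_synonym 'p mpoly = "(nat \<Rightarrow>\<^sub>0 nat) \<Rightarrow>\<^sub>0 'p mod_ring"

definition mvar :: "nat \<Rightarrow> 'p::prime_card mpoly" where
  "mvar i = Poly_Mapping.single (Poly_Mapping.single i 1) 1"

definition in_vars :: "nat \<Rightarrow> 'p::prime_card mpoly \<Rightarrow> bool" where
  "in_vars r q \<longleftrightarrow> (\<forall>m\<in>Poly_Mapping.keys q. Poly_Mapping.keys m \<subseteq> {1..r})"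

text \<open>For F(x) = sum_k F_k(x^p) x^k (k < p), F[t,x] = sum_k F_k(t) x^k;
  here evaluated at t = a, x = b.\<close>
definition bracket_subst :: "'p::prime_card mpoly poly \<Rightarrow> 'p mpoly \<Rightarrow> 'p mpoly \<Rightarrow> 'p mpoly" where
  "bracket_subst F a b =
     (\<Sum>n\<le>degree F. coeff F n * a ^ (n div CARD('p)) * b ^ (n mod CARD('p)))"

definition fpoly :: "nat \<Rightarrow> 'p::prime_card mpoly poly" where
  "fpoly r = (\<Prod>l\<in>{1..r}. [:- mvar l, 1:])"

end

theory Submission
  imports Defs
begin

type_synonym 'p K = "'p mpoly"

lemma iv0[simp]: "in_vars r 0" by (simp add: in_vars_def)
lemma iv1[simp]: "in_vars r 1" by (simp add: in_vars_def)

lemma iv_add[simp]: "in_vars r a \<Longrightarrow> in_vars r b \<Longrightarrow> in_vars r (a + b)"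
  unfolding in_vars_def using keys_add[of a b] by blast

lemma iv_uminus[simp]: "in_vars r a \<Longrightarrow> in_vars r (- a)"
  unfolding in_vars_def by simp

lemma iv_diff[simp]: "in_vars r a \<Longrightarrow> in_vars r b \<Longrightarrow> in_vars r (a - b)"
  unfolding in_vars_def using keys_diff[of a b] by blast

lemma iv_mult[simp]:
  fixes a b :: "'p::prime_card mpoly"
  assumes A: "in_vars r a" and B: "in_vars r b" shows "in_vars r (a * b)"
  unfolding in_vars_def
proof
  fix m assume m: "m \<in> Poly_Mapping.keys (a * b)"
  from m keys_mult[of a b] obtain u v where uv: "m = u + v" "u \<in> Poly_Mapping.keys a" "v \<in> Poly_Mapping.keys b" by blast
  have "Poly_Mapping.keys u \<subseteq> {1..r}" "Poly_Mapping.keys v \<subseteq> {1..r}" using A B uv unfolding in_vars_def by auto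
  then show "Poly_Mapping.keys m \<subseteq> {1..r}" using uv(1) keys_add[of u v] by blast
qed

lemma iv_sum[simp]: "(\<And>x. x \<in> A \<Longrightarrow> in_vars r (f x)) \<Longrightarrow> in_vars r (sum f A)"
  by (induction A rule: infinite_finite_induct) auto

lemma iv_prod[simp]: "(\<And>x. x \<in> A \<Longrightarrow> in_vars r (f x)) \<Longrightarrow> in_vars r (prod f A)"
  by (induction A rule: infinite_finite_induct) auto

lemma iv_power[simp]: "in_vars r a \<Longrightarrow> in_vars r (a ^ n)"
  by (induction n) auto

lemma iv_of_nat[simp]: "in_vars r (of_nat n)"
  by (induction n) auto

lemma iv_mvar: "l \<in> {1..r} \<Longrightarrow> in_vars r (mvar l)"
  unfolding in_vars_def mvar_def by auto

definition rdvd :: "nat \<Rightarrow> 'p::prime_card mpoly \<Rightarrow> 'p mpoly \<Rightarrow> bool" where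
  "rdvd r x y \<longleftrightarrow> (\<exists>q. in_vars r q \<and> y = x * q)"

lemma rd0[simp]: "rdvd r x 0" unfolding rdvd_def by (rule exI[of _ 0]) simp

lemma rd_one: "in_vars r y \<Longrightarrow> rdvd r 1 y" unfolding rdvd_def by auto

lemma rd_add: "rdvd r x a \<Longrightarrow> rdvd r x b \<Longrightarrow> rdvd r x (a + b)"
  unfolding rdvd_def
proof (elim exE conjE)
  fix q1 q2 assume "in_vars r q1" "a = x * q1" "in_vars r q2" "b = x * q2"
  then show "\<exists>q. in_vars r q \<and> a + b = x * q"
    by (intro exI[of _ "q1 + q2"]) (simp add: distrib_left)
qed

lemma rd_multR: "rdvd r x a \<Longrightarrow> in_vars r z \<Longrightarrow> rdvd r x (a * z)"
  unfolding rdvd_def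
proof (elim exE conjE)
  fix q1 assume "in_vars r q1" "a = x * q1" "in_vars r z"
  then show "\<exists>q. in_vars r q \<and> a * z = x * q"
    by (intro exI[of _ "q1 * z"]) (simp add: mult.assoc)
qed

lemma rd_multL: "rdvd r x a \<Longrightarrow> in_vars r z \<Longrightarrow> rdvd r x (z * a)"
  using rd_multR[of r x a z] by (simp add: mult.commute)

lemma rd_mult2: "rdvd r x a \<Longrightarrow> rdvd r y b \<Longrightarrow> rdvd r (x * y) (a * b)"
  unfolding rdvd_def
proof (elim exE conjE)
  fix q1 q2 assume "in_vars r q1" "a = x * q1" "in_vars r q2" "b = y * q2"
  then show "\<exists>q. in_vars r q \<and> a * b = x * y * q"
    by (intro exI[of _ "q1 * q2"]) (simp add: ac_simps)
qed

lemma rd_sum: "(\<And>k. k \<in> A \<Longrightarrow> rdvd r x (f k)) \<Longrightarrow> rdvd r x (sum f A)"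
  by (induction A rule: infinite_finite_induct) (auto intro: rd_add)

lemma rd_pow: "in_vars r u \<Longrightarrow> w \<le> k \<Longrightarrow> rdvd r (u ^ w) (u ^ k)"
  unfolding rdvd_def by (rule exI[of _ "u ^ (k - w)"]) (simp flip: power_add)

lemma K_of_nat_p: "(of_nat CARD('p) :: 'p::prime_card mpoly) = 0"
proof -
  have "(of_nat CARD('p) :: 'p::prime_card mpoly) = Poly_Mapping.single 0 (of_nat CARD('p))"
    by (simp only: single_of_nat)
  also have "\<dots> = 0" by simp
  finally show ?thesis .
qed

lemma KP_of_nat_p: "(of_nat CARD('p) :: 'p::prime_card mpoly poly) = 0"
  by (simp add: of_nat_poly K_of_nat_p)

lemma frob:
  fixes x y :: "'a::comm_ring_1"
  assumes "prime p" "of_nat p = (0::'a)"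
  shows "(x + y) ^ p = x ^ p + y ^ p"
proof -
  have "(x + y) ^ p = (\<Sum>k\<le>p. of_nat (p choose k) * x ^ k * y ^ (p - k))"
    by (rule binomial_ring)
  also have "\<dots> = (\<Sum>k\<in>{0,p}. of_nat (p choose k) * x ^ k * y ^ (p - k))"
  proof (intro sum.mono_neutral_right ballI)
    fix k assume "k \<in> {..p} - {0, p}"
    hence k: "k > 0" "k < p" by auto
    have "p dvd (p choose k)"
      by (rule dvd_choose_prime) (use k assms in auto)
    then obtain m where "p choose k = p * m" by blast
    hence "of_nat (p choose k) = (0 :: 'a)" using assms by simp
    thus "of_nat (p choose k) * x ^ k * y ^ (p - k) = 0" by simp
  qed auto
  finally show ?thesis
    using assms prime_gt_0_nat[of p] by (simp add: add_ac)
qed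


definition PC :: "nat \<Rightarrow> 'p::prime_card mpoly poly \<Rightarrow> bool" where
  "PC r F \<longleftrightarrow> (\<forall>n. in_vars r (coeff F n))"

definition PD :: "nat \<Rightarrow> 'p::prime_card mpoly \<Rightarrow> 'p mpoly poly \<Rightarrow> bool" where
  "PD r D F \<longleftrightarrow> (\<forall>n. rdvd r D (coeff F n))"

lemma PC_0[simp]: "PC r 0" by (simp add: PC_def)
lemma PC_pCons: "in_vars r a \<Longrightarrow> PC r F \<Longrightarrow> PC r (pCons a F)"
  by (auto simp: PC_def coeff_pCons split: nat.split)
lemma PC_1[simp]: "PC r 1"
  by (simp add: one_pCons PC_pCons)
lemma PC_mult: "PC r F \<Longrightarrow> PC r G \<Longrightarrow> PC r (F * G)"
  by (simp add: PC_def coeff_mult)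
lemma PC_power: "PC r F \<Longrightarrow> PC r (F ^ n)"
  by (induction n) (auto intro: PC_mult)
lemma PC_prod: "(\<And>x. x \<in> A \<Longrightarrow> PC r (f x)) \<Longrightarrow> PC r (prod f A)"
  by (induction A rule: infinite_finite_induct) (auto intro: PC_mult)

lemma PD_add: "PD r D F \<Longrightarrow> PD r D G \<Longrightarrow> PD r D (F + G)"
  by (simp add: PD_def rd_add)
lemma PD_0[simp]: "PD r D 0" by (simp add: PD_def)
lemma PD_sum: "(\<And>x. x \<in> A \<Longrightarrow> PD r D (f x)) \<Longrightarrow> PD r D (sum f A)"
  by (induction A rule: infinite_finite_induct) (auto intro: PD_add)
lemma PD_smult: "rdvd r D u \<Longrightarrow> PC r F \<Longrightarrow> PD r D (smult u F)"
  by (simp add: PD_def PC_def rd_multR)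
lemma PD_mult: "PD r D F \<Longrightarrow> PC r G \<Longrightarrow> PD r D (F * G)"
  unfolding PD_def PC_def coeff_mult by (auto intro!: rd_sum rd_multR)
lemma PD_pderiv: "PD r D F \<Longrightarrow> PD r D (pderiv F)"
  unfolding PD_def coeff_pderiv by (auto intro!: rd_multL)
lemma PD_pderivs: "PD r D F \<Longrightarrow> PD r D ((pderiv ^^ s) F)"
  by (induction s) (auto intro: PD_pderiv)

lemma bs_alt:
  fixes F :: "'p::prime_card mpoly poly"
  assumes "degree F < N"
  shows "bracket_subst F a b = (\<Sum>n<N. coeff F n * a ^ (n div CARD('p)) * b ^ (n mod CARD('p)))"
  unfolding bracket_subst_def
  by (rule sum.mono_neutral_left) (use assms in \<open>auto simp: coeff_eq_0\<close>)

lemma bs_add: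
  fixes F G :: "'p::prime_card mpoly poly"
  shows "bracket_subst (F + G) a b = bracket_subst F a b + bracket_subst G a b"
proof -
  define N where "N = Suc (max (degree F) (degree G))"
  have "degree (F + G) < N" unfolding N_def
    using degree_add_le_max[of F G] by linarith
  have dFG: "degree F < N" "degree G < N" unfolding N_def by auto
  have "bracket_subst (F + G) a b = (\<Sum>n<N. coeff F n * a ^ (n div CARD('p)) * b ^ (n mod CARD('p)) + coeff G n * a ^ (n div CARD('p)) * b ^ (n mod CARD('p)))"
    using bs_alt[of "F+G" N] \<open>degree (F + G) < N\<close> by (simp add: distrib_right)
  also have "\<dots> = bracket_subst F a b + bracket_subst G a b"
    using bs_alt[of F N] bs_alt[of G N] dFG by (simp only: sum.distrib)
  finally show ?thesis .
qed

lemma bs_smult: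
  fixes F :: "'p::prime_card mpoly poly"
  shows "bracket_subst (smult u F) a b = u * bracket_subst F a b"
proof -
  define N where "N = Suc (degree F)"
  have "degree (smult u F) < N" unfolding N_def
    using degree_smult_le[of u F] by linarith
  have "degree F < N" unfolding N_def by simp
  have "bracket_subst (smult u F) a b = (\<Sum>n<N. u * (coeff F n * a ^ (n div CARD('p)) * b ^ (n mod CARD('p))))"
    using bs_alt[of "smult u F" N] \<open>degree (smult u F) < N\<close> by (simp add: mult.assoc)
  also have "\<dots> = u * bracket_subst F a b"
    using bs_alt[of F N] \<open>degree F < N\<close> by (simp only: sum_distrib_left)
  finally show ?thesis .
qed

lemma bs_monom:
  fixes W :: "'p::prime_card mpoly poly"
  shows "bracket_subst (monom 1 CARD('p) * W) a b = a * bracket_subst W a b"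
proof -
  define p where "p = CARD('p)"
  have p0: "p > 0" unfolding p_def by simp
  define N where "N = Suc (degree W)"
  have dW: "degree W < N" unfolding N_def by simp
  define g where "g n = coeff (monom 1 p * W) n * a ^ (n div p) * b ^ (n mod p)" for n
  have "degree (monom 1 p * W) \<le> p + degree W"
    using degree_mult_le[of "monom 1 p" W] degree_monom_le[of "1::'p mpoly" p] by linarith
  then have d: "degree (monom 1 p * W) < N + p" unfolding N_def by linarith
  have "bracket_subst (monom 1 CARD('p) * W) a b = (\<Sum>n<N+p. g n)"
    using bs_alt[OF d] unfolding g_def p_def by simp
  also have "\<dots> = (\<Sum>n\<in>{0..<p}. g n) + (\<Sum>n\<in>{p..<N+p}. g n)"
    by (simp add: lessThan_atLeast0 sum.atLeastLessThan_concat)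
  also have "(\<Sum>n\<in>{0..<p}. g n) = 0"
    by (rule sum.neutral) (auto simp: g_def coeff_monom_mult)
  also have "(\<Sum>n\<in>{p..<N+p}. g n) = (\<Sum>n\<in>{0+p..<N+p}. g n)" by simp
  also have "\<dots> = (\<Sum>n\<in>{0..<N}. g (n + p))"
    by (rule sum.shift_bounds_nat_ivl)
  also have "\<dots> = (\<Sum>n\<in>{0..<N}. a * (coeff W n * a ^ (n div p) * b ^ (n mod p)))"
  proof (rule sum.cong)
    fix n assume "n \<in> {0..<N}"
    have "(n + p) div p = Suc (n div p)" using p0 by simp
    moreover have "(n + p) mod p = n mod p" by simp
    moreover have "coeff (monom 1 p * W) (n + p) = coeff W n" by (simp add: coeff_monom_mult)
    ultimately show "g (n + p) = a * (coeff W n * a ^ (n div p) * b ^ (n mod p))"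
      unfolding g_def by (simp only: power_Suc ac_simps)
  qed simp
  also have "\<dots> = a * bracket_subst W a b"
    using bs_alt[of W N] dW unfolding p_def
    by (simp only: sum_distrib_left lessThan_atLeast0)
  finally show ?thesis by simp
qed


lemma bs_dvd:
  fixes F :: "'p::prime_card mpoly poly"
  assumes "PD r D F" "in_vars r a" "in_vars r b"
  shows "rdvd r D (bracket_subst F a b)"
  using assms unfolding bracket_subst_def PD_def by (auto intro!: rd_sum rd_multR)

lemma Y_pow:
  fixes c :: "'p::prime_card mpoly"
  shows "[:-c,1:] ^ CARD('p) = monom 1 CARD('p) + [:-(c ^ CARD('p)):]"
proof -
  have pr: "prime CARD('p)" by (rule prime_card)
  have "[:-c,1:] = monom 1 1 + [:-c:]" by (simp add: monom_altdef)
  then have "[:-c,1:] ^ CARD('p) = (monom 1 1) ^ CARD('p) + [:-c:] ^ CARD('p)"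
    using frob[OF pr KP_of_nat_p] by simp
  also have "(monom (1::'p mpoly) 1) ^ CARD('p) = monom 1 CARD('p)" by (simp add: monom_power)
  also have "[:-c:] ^ CARD('p) = [:(-c) ^ CARD('p):]" by (simp add: poly_const_pow)
  also have "(-c) ^ CARD('p) = -(c ^ CARD('p))"
  proof -
    have "(c + -c) ^ CARD('p) = c ^ CARD('p) + (-c) ^ CARD('p)"
      using frob[OF pr K_of_nat_p] by blast
    moreover have "(c + -c) ^ CARD('p) = 0" using prime_gt_0_nat[OF pr] by simp
    ultimately show ?thesis by (metis add_eq_0_iff)
  qed
  finally show ?thesis .
qed

lemma bs_zero:
  fixes c b :: "'p::prime_card mpoly" and W :: "'p mpoly poly"
  shows "bracket_subst ([:-c,1:] ^ CARD('p) * W) (c ^ CARD('p)) b = 0"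
proof -
  have "[:-c,1:] ^ CARD('p) * W = monom 1 CARD('p) * W + smult (-(c ^ CARD('p))) W"
    by (simp add: Y_pow distrib_right)
  then have "bracket_subst ([:-c,1:] ^ CARD('p) * W) (c ^ CARD('p)) b
     = c ^ CARD('p) * bracket_subst W (c ^ CARD('p)) b + (-(c ^ CARD('p))) * bracket_subst W (c ^ CARD('p)) b"
    by (simp only: bs_add bs_monom bs_smult)
  then show ?thesis by simp
qed

lemma pderiv_Yp:
  fixes c :: "'p::prime_card mpoly"
  shows "pderiv ([:-c,1:] ^ CARD('p)) = 0"
proof -
  have "CARD('p) = Suc (CARD('p) - 1)" by simp
  then have "pderiv ([:-c,1:] ^ CARD('p)) = smult (of_nat CARD('p)) ([:-c,1:] ^ (CARD('p) - 1)) * pderiv [:-c,1:]"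
    by (metis pderiv_power_Suc)
  then show ?thesis by (simp add: K_of_nat_p)
qed

lemma pderivs_Yp:
  fixes c :: "'p::prime_card mpoly"
  shows "(pderiv ^^ s) ([:-c,1:] ^ CARD('p) * Z) = [:-c,1:] ^ CARD('p) * (pderiv ^^ s) Z"
  by (induction s) (auto simp: pderiv_mult pderiv_Yp)

lemma pderivs_add:
  fixes F G :: "'p::prime_card mpoly poly"
  shows "(pderiv ^^ s) (F + G) = (pderiv ^^ s) F + (pderiv ^^ s) G"
  by (induction s) (auto simp: pderiv_add)

lemma prod_coeff:
  fixes u :: "nat \<Rightarrow> 'p::prime_card mpoly"
  assumes "finite S" "\<forall>l\<in>S. in_vars r (u l)"
  shows "m + w \<le> e \<Longrightarrow> rdvd r (\<Prod>l\<in>S. u l ^ w) (coeff (\<Prod>l\<in>S. [:u l,1:] ^ e) m)"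
  using assms
proof (induction S arbitrary: m rule: finite_induct)
  case empty
  have "in_vars r (coeff (1::'p mpoly poly) m)" using PC_1[of r] unfolding PC_def by blast
  then show ?case by (simp add: rd_one)
next
  case (insert l S)
  have ul: "in_vars r (u l)" using insert by simp
  have "coeff (\<Prod>l\<in>insert l S. [:u l,1:] ^ e) m
      = (\<Sum>a\<le>m. coeff ([:u l,1:] ^ e) a * coeff (\<Prod>l\<in>S. [:u l,1:] ^ e) (m - a))"
    using insert by (simp add: coeff_mult)
  moreover have "rdvd r (u l ^ w * (\<Prod>l\<in>S. u l ^ w)) (\<Sum>a\<le>m. coeff ([:u l,1:] ^ e) a * coeff (\<Prod>l\<in>S. [:u l,1:] ^ e) (m - a))"
  proof (rule rd_sum, rule rd_mult2)
    fix a assume a: "a \<in> {..m}"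
    then have ae: "a \<le> e" using insert by simp
    have "coeff ([:u l,1:] ^ e) a = of_nat (e choose a) * u l ^ (e - a)"
      using coeff_linear_poly_power[OF ae, of "u l" 1] by simp
    moreover have "rdvd r (u l ^ w) (u l ^ (e - a))" using rd_pow[OF ul] a insert by simp
    ultimately show "rdvd r (u l ^ w) (coeff ([:u l,1:] ^ e) a)" by (simp add: rd_multL)
    show "rdvd r (\<Prod>l\<in>S. u l ^ w) (coeff (\<Prod>l\<in>S. [:u l,1:] ^ e) (m - a))"
      using insert a by simp
  qed
  ultimately show ?case using insert by simp
qed


lemma pcompose_pow: "pcompose (P ^ n) q = (pcompose P q) ^ n"
  by (induction n) (simp_all add: pcompose_1 pcompose_mult)

lemma pcompose_as_sum:
  fixes Q Y :: "'a::comm_ring_1 poly"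
  shows "pcompose Q Y = (\<Sum>k\<le>degree Q. smult (coeff Q k) (Y ^ k))"
proof -
  have "pcompose Q Y = pcompose (\<Sum>k\<le>degree Q. monom (coeff Q k) k) Y"
    by (simp add: poly_as_sum_of_monoms)
  also have "\<dots> = (\<Sum>k\<le>degree Q. smult (coeff Q k) (Y ^ k))"
    unfolding pcompose_sum
    by (rule sum.cong) (simp_all add: monom_altdef pcompose_smult pcompose_pow pcompose_pCons)
  finally show ?thesis .
qed

theorem lemma1:
  fixes r e d i j :: nat
  defines "p \<equiv> CARD('p::prime_card)"
  assumes "r \<ge> 2" and "p - 1 < 2 * e" and "e \<le> p - 1" and "1 \<le> d" and "d \<le> p"
    and "i \<in> {1..r}" and "j \<in> {1..r}"
  shows "\<exists>q :: 'p mpoly. in_vars r q \<and>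
    bracket_subst ((pderiv ^^ (p - d)) (fpoly r ^ e)) (mvar i ^ p) (mvar j)
      = (\<Prod>l\<in>{1..r} - {i}. (mvar i - mvar l) ^ (2 * e - (p - 1))) * q"
proof -
  note ep = assms(3,4)
  define c :: "'p mpoly" where "c = mvar i"
  define Y where "Y = [:-c, 1:]"
  define S where "S = {1..r} - {i}"
  define u where "u l = c - mvar l" for l
  define w where "w = 2 * e - (p - 1)"
  define Q where "Q = (\<Prod>l\<in>S. [:u l, 1:] ^ e)"
  define D where "D = (\<Prod>l\<in>S. u l ^ w)"
  define s where "s = p - d"
  have finS: "finite S" unfolding S_def by simp
  have ivc: "in_vars r c" unfolding c_def using assms(7) by (rule iv_mvar)
  have ivu: "\<forall>l\<in>S. in_vars r (u l)" unfolding u_def S_def using ivc by (auto intro!: iv_diff iv_mvar)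
  have PCY: "PC r Y" unfolding Y_def using ivc by (intro PC_pCons) auto
  have p2: "p \<ge> 2" unfolding p_def using prime_card[where 'a='p] prime_ge_2_nat by blast
  have G1: "fpoly r ^ e = Y ^ e * pcompose Q Y"
  proof -
    have F: "fpoly r = [:-mvar i, 1:] * (\<Prod>l\<in>S. [:-mvar l, 1:])"
      unfolding fpoly_def S_def using assms(7) by (simp add: prod.remove)
    have "fpoly r ^ e = Y ^ e * (\<Prod>l\<in>S. [:-mvar l, 1:] ^ e)"
      unfolding F Y_def c_def by (simp only: power_mult_distrib prod_power_distrib)
    moreover have "pcompose Q Y = (\<Prod>l\<in>S. [:-mvar l, 1:] ^ e)"
      unfolding Q_def pcompose_prod pcompose_pow
      by (rule prod.cong) (simp_all add: pcompose_pCons Y_def u_def)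
    ultimately show ?thesis by simp
  qed
  define A where "A = {..degree Q}"
  define low where "low = (\<Sum>k\<in>A. if k < p - e then smult (coeff Q k) (Y ^ k) else 0)"
  define Z where "Z = (\<Sum>k\<in>A. if k < p - e then 0 else smult (coeff Q k) (Y ^ (k - (p - e))))"
  have "pcompose Q Y = (\<Sum>k\<in>A. (if k < p - e then smult (coeff Q k) (Y ^ k) else 0)
          + (if k < p - e then 0 else smult (coeff Q k) (Y ^ k)))"
    unfolding pcompose_as_sum A_def by (rule sum.cong) auto
  also have "\<dots> = low + (\<Sum>k\<in>A. if k < p - e then 0 else smult (coeff Q k) (Y ^ k))"
    unfolding low_def by (simp add: sum.distrib)
  also have "(\<Sum>k\<in>A. if k < p - e then 0 else smult (coeff Q k) (Y ^ k)) = Y ^ (p - e) * Z"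
    unfolding Z_def sum_distrib_left
  proof (rule sum.cong)
    fix k assume "k \<in> A"
    show "(if k < p - e then 0 else smult (coeff Q k) (Y ^ k)) =
          Y ^ (p - e) * (if k < p - e then 0 else smult (coeff Q k) (Y ^ (k - (p - e))))"
    proof (cases "k < p - e")
      case False
      then have "Y ^ k = Y ^ (p - e) * Y ^ (k - (p - e))" by (simp flip: power_add)
      then show ?thesis using False by (simp add: mult_smult_right)
    qed simp
  qed simp
  finally have "pcompose Q Y = low + Y ^ (p - e) * Z" .
  then have G2: "fpoly r ^ e = Y ^ e * low + Y ^ p * Z"
    unfolding G1 using ep p2 by (simp add: distrib_left mult.assoc flip: power_add)
  have "bracket_subst ((pderiv ^^ s) (fpoly r ^ e)) (c ^ p) (mvar j)
      = bracket_subst ((pderiv ^^ s) (Y ^ e * low)) (c ^ p) (mvar j)"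
    unfolding G2 pderivs_add bs_add Y_def p_def pderivs_Yp bs_zero by simp
  moreover have "PD r D (Y ^ e * low)"
  proof -
    have "PD r D low" unfolding low_def
    proof (rule PD_sum)
      fix k assume "k \<in> A"
      show "PD r D (if k < p - e then smult (coeff Q k) (Y ^ k) else 0)"
      proof (cases "k < p - e")
        case True
        then have "k + w \<le> e" unfolding w_def using ep p2 by linarith
        then have "rdvd r D (coeff Q k)" unfolding D_def Q_def using prod_coeff[OF finS ivu] by blast
        then show ?thesis using True PCY by (simp add: PD_smult PC_power)
      qed simp
    qed
    then show ?thesis using PD_mult[of r D low "Y ^ e"] PC_power[OF PCY] by (simp add: mult.commute)
  qed
  then have "rdvd r D (bracket_subst ((pderiv ^^ s) (Y ^ e * low)) (c ^ p) (mvar j))"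
    using ivc assms(8) by (intro bs_dvd PD_pderivs) (auto intro: iv_mvar)
  ultimately have "rdvd r D (bracket_subst ((pderiv ^^ s) (fpoly r ^ e)) (c ^ p) (mvar j))" by simp
  then show ?thesis unfolding rdvd_def D_def u_def w_def S_def c_def s_def by blast
qed

end
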